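(* Let $\ell$ be an integral domain such that $\operatorname{KH}_0(\ell)\neq0$. Put $\Omega_0=(t^2-t)\ell[t]$ and $\Omega_1=\{(p,q)\in\ell[t]\times\ell[t]: p(1)=q(0),\ p(0)=q(1)=0\}$. Then the algebra homomorphism $\beta:\Omega_0\to\Omega_1$, $\beta(p)=(p,0)$, is not a polynomial homotopy equivalence.
   Context: Algebras are associative not necessarily unital $\ell$-algebras. $\operatorname{KH}_0$ denotes Weibel's homotopy $K$-theory in degree $0$. Polynomial homotopy: $f,g:A\to B$ elementary homotopic if there is a homomorphism $H:A\to B[t]$ with $\mathrm{ev}_0H=f$, $\mathrm{ev}_1H=g$; homotopy is the generated equivalence relation; a polynomial homotopy equivalence is a homomorphism $f$ for which there is $g$ with $gf$ and $fg$ homotopic to the identities. *)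

theory Defs
  imports "HOL-Computational_Algebra.Polynomial" "HOL-Library.Function_Algebras"
begin

text \<open>An l-algebra is modelled as a subset A of a commutative ring 'r whose l-module
structure comes from a ring map iota : l -> 'r, scalar multiplication being
c . x = iota c * x. Algebras need not be unital and homomorphisms need not preserve 1.\<close>

definition alg_hom :: "('l \<Rightarrow> 'r::comm_ring_1) \<Rightarrow> ('l \<Rightarrow> 's::comm_ring_1) \<Rightarrow> 'r set \<Rightarrow> 's set \<Rightarrow> ('r \<Rightarrow> 's) \<Rightarrow> bool" where
  "alg_hom iA iB A B f \<longleftrightarrow>
     (\<forall>x\<in>A. f x \<in> B) \<and>
     (\<forall>x\<in>A. \<forall>y\<in>A. f (x + y) = f x + f y) \<and>
     (\<forall>x\<in>A. \<forall>y\<in>A. f (x * y) = f x * f y) \<and>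
     (\<forall>c. \<forall>x\<in>A. f (iA c * x) = iB c * f x)"

definition poly_alg :: "'s::zero set \<Rightarrow> 's poly set" where
  "poly_alg B = {p. \<forall>k. coeff p k \<in> B}"

definition poly_emb :: "('l \<Rightarrow> 's::zero) \<Rightarrow> 'l \<Rightarrow> 's poly" where
  "poly_emb iB c = [:iB c:]"

definition elem_homotopic ::
  "('l \<Rightarrow> 'r::comm_ring_1) \<Rightarrow> ('l \<Rightarrow> 's::comm_ring_1) \<Rightarrow> 'r set \<Rightarrow> 's set \<Rightarrow> ('r \<Rightarrow> 's) \<Rightarrow> ('r \<Rightarrow> 's) \<Rightarrow> bool" where
  "elem_homotopic iA iB A B f g \<longleftrightarrow>
     alg_hom iA iB A B f \<and> alg_hom iA iB A B g \<and>
     (\<exists>H. alg_hom iA (poly_emb iB) A (poly_alg B) H \<and>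
          (\<forall>x\<in>A. poly (H x) 0 = f x) \<and> (\<forall>x\<in>A. poly (H x) 1 = g x))"

definition homotopic ::
  "('l \<Rightarrow> 'r::comm_ring_1) \<Rightarrow> ('l \<Rightarrow> 's::comm_ring_1) \<Rightarrow> 'r set \<Rightarrow> 's set \<Rightarrow> ('r \<Rightarrow> 's) \<Rightarrow> ('r \<Rightarrow> 's) \<Rightarrow> bool" where
  "homotopic iA iB A B = (\<lambda>f g. elem_homotopic iA iB A B f g \<or> elem_homotopic iA iB A B g f)\<^sup>*\<^sup>*"

definition poly_htpy_equiv ::
  "('l \<Rightarrow> 'r::comm_ring_1) \<Rightarrow> ('l \<Rightarrow> 's::comm_ring_1) \<Rightarrow> 'r set \<Rightarrow> 's set \<Rightarrow> ('r \<Rightarrow> 's) \<Rightarrow> bool" where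
  "poly_htpy_equiv iA iB A B f \<longleftrightarrow>
     alg_hom iA iB A B f \<and>
     (\<exists>g. alg_hom iB iA B A g \<and>
          homotopic iA iA A A (g \<circ> f) id \<and> homotopic iB iB B B (f \<circ> g) id)"

definition Omega0 :: "'a::comm_ring_1 poly set" where
  "Omega0 = {[:0, -1, 1:] * p | p. True}"

definition emb0 :: "'a::comm_ring_1 \<Rightarrow> 'a poly" where
  "emb0 c = [:c:]"

text \<open>Omega_1: a pair (p,q) in l[t] x l[t] is encoded as the function x :: bool => l[t]
with x True = p and x False = q (pointwise ring operations, HOL-Library.Function_Algebras).\<close>
definition Omega1 :: "(bool \<Rightarrow> 'a::comm_ring_1 poly) set" where
  "Omega1 = {x. poly (x True) 1 = poly (x False) 0 \<and> poly (x True) 0 = 0 \<and> poly (x False) 1 = 0}"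

definition emb1 :: "'a::comm_ring_1 \<Rightarrow> (bool \<Rightarrow> 'a poly)" where
  "emb1 c = (\<lambda>_. [:c:])"

definition beta :: "'a::comm_ring_1 poly \<Rightarrow> (bool \<Rightarrow> 'a poly)" where
  "beta p = (\<lambda>b. if b then p else 0)"

end

theory Submission
  imports Defs "HOL-Computational_Algebra.Field_as_Ring" "HOL-Computational_Algebra.Fraction_Field" "HOL-Computational_Algebra.Polynomial_Factorial"
begin
instantiation fract :: (idom)
  "{unique_euclidean_ring, normalization_euclidean_semiring, normalization_semidom_multiplicative}"
begin
definition [simp]: "normalize_fract = (normalize_field :: 'a fract \<Rightarrow> _)"
definition [simp]: "unit_factor_fract = (unit_factor_field :: 'a fract \<Rightarrow> _)"
definition [simp]: "modulo_fract = (mod_field :: 'a fract \<Rightarrow> _)"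
definition [simp]: "euclidean_size_fract = (euclidean_size_field :: 'a fract \<Rightarrow> _)"
definition [simp]: "division_segment (x :: 'a fract) = 1"
instance
  by standard
    (simp_all add: dvd_field_iff field_split_simps split: if_splits)
end

instantiation fract :: (idom) euclidean_ring_gcd
begin
definition gcd_fract :: "'a fract \<Rightarrow> 'a fract \<Rightarrow> 'a fract" where
  "gcd_fract = Euclidean_Algorithm.gcd"
definition lcm_fract :: "'a fract \<Rightarrow> 'a fract \<Rightarrow> 'a fract" where
  "lcm_fract = Euclidean_Algorithm.lcm"
definition Gcd_fract :: "'a fract set \<Rightarrow> 'a fract" where
 "Gcd_fract = Euclidean_Algorithm.Gcd"
definition Lcm_fract :: "'a fract set \<Rightarrow> 'a fract" where
 "Lcm_fract = Euclidean_Algorithm.Lcm"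
instance by standard (simp_all add: gcd_fract_def lcm_fract_def Gcd_fract_def Lcm_fract_def)
end

instance fract :: (idom) field_gcd ..

lemma gcd_step:
  fixes A B :: "'b::field_gcd poly"
  assumes "A \<noteq> 0" "B * B = A * B + A * A * A"
  shows "A dvd B"
proof -
  define g where "g = gcd A B"
  have g0: "g \<noteq> 0" using assms(1) g_def by simp
  obtain a b where ab: "A = a * g" "B = b * g" "coprime a b"
    using gcd_coprime_exists[OF g0[unfolded g_def]] g_def by blast
  have "(b * b) * (g * g) = (a * b + a * (a * a * g)) * (g * g)"
    using assms(2) unfolding ab by (simp add: algebra_simps)
  hence "b * b = a * b + a * (a * a * g)" using g0 by simp
  hence "b * (b - a) = a * (a * a * g)" by (simp add: algebra_simps)
  hence d: "a dvd b * (b - a)" by (metis dvd_triv_left)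
  have c2: "coprime a (b - a)"
  proof (rule coprimeI)
    fix c assume c: "c dvd a" "c dvd b - a"
    then have "c dvd b" by (metis dvd_add diff_add_cancel)
    then show "is_unit c" using ab(3) c(1) by (meson coprime_common_divisor)
  qed
  have "a dvd b" using d c2 ab(3) by (simp add: coprime_dvd_mult_left_iff)
  hence "is_unit a" using ab(3) by (metis coprime_common_divisor dvd_refl)
  then obtain k where k: "1 = a * k" by (auto elim: dvdE)
  have "B = (b * k) * A" unfolding ab by (metis k mult.assoc mult.commute mult.left_neutral)
  thus ?thesis by simp
qed

lemma L2:
  fixes A B :: "'b::idom poly"
  assumes Anz: "A \<noteq> 0" and rel: "B*B = A*B + A*A*A" and A0: "poly A 0 = 0"
  shows "\<exists>U. B = U * A"
proof -
  let ?f = "map_poly to_fract"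
  have Af: "?f A \<noteq> 0" using Anz by simp
  have eq: "?f B * ?f B = ?f A * ?f B + ?f A * ?f A * ?f A"
    using arg_cong[OF rel, of ?f] by (simp add: fract_poly_mult fract_poly_add)
  obtain V where V: "?f B = V * ?f A" using gcd_step[OF Af eq] by (metis dvdE mult.commute)
  have "(?f A * ?f A) * (V*V - V - ?f A) = 0"
    using eq unfolding V by (simp add: algebra_simps)
  hence VV: "V*V - V = ?f A" using Af by simp
  define mu where "mu k = coeff V k" for k
  have al: "coeff (?f A) k = to_fract (coeff A k)" for k by (simp add: coeff_map_poly)
  have "coeff (V*V - V) 0 = 0" using VV A0 al[of 0] by (simp add: poly_0_coeff_0)
  hence m0: "mu 0 * mu 0 = mu 0" by (simp add: mu_def coeff_mult)
  hence "mu 0 = 0 \<or> mu 0 = 1"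
    by (metis (no_types, lifting) mult_cancel_left1 mult_zero_left)
  then have "to_fract (if mu 0 = 0 then -1 else 1) = 2 * mu 0 - 1"
    by (elim disjE) (simp_all add: to_fract_uminus)
  then obtain e0 where e0: "to_fract e0 = 2 * mu 0 - 1" by blast
  have eps: "(2 * mu 0 - 1) * (2 * mu 0 - 1) = 1"
    using \<open>mu 0 = 0 \<or> mu 0 = 1\<close> by (elim disjE) simp_all
  have key: "mu k \<in> range to_fract" for k
  proof (induction k rule: less_induct)
    case (less k)
    show ?case
    proof (cases "k = 0")
      case True
      then show ?thesis using \<open>mu 0 = 0 \<or> mu 0 = 1\<close>
        by (metis rangeI to_fract_0 to_fract_1)
    next
      case False
      define r where "r i = (SOME x. to_fract x = mu i)" for i
      have r: "to_fract (r i) = mu i" if "i < k" for i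
        using less[OF that] unfolding r_def by (metis (mono_tags, lifting) imageE someI)
      define S where "S = (\<Sum>i\<in>{1..<k}. mu i * mu (k - i))"
      have S: "S = to_fract (\<Sum>i\<in>{1..<k}. r i * r (k - i))"
        unfolding S_def to_fract_sum to_fract_mult
        by (rule sum.cong) (auto simp: r)
      have split: "{..k} = insert 0 (insert k {1..<k})" using False by auto
      have "coeff (V*V) k = (\<Sum>i\<le>k. mu i * mu (k - i))" by (simp add: coeff_mult mu_def)
      also have "\<dots> = mu 0 * mu k + mu k * mu 0 + S"
        unfolding split S_def using False by (simp add: add.assoc)
      finally have "mu 0 * mu k + mu k * mu 0 + S - mu k = to_fract (coeff A k)"
        using arg_cong[OF VV, of "\<lambda>p. coeff p k"] al[of k] by (simp add: mu_def)
      hence h: "mu k * (2 * mu 0 - 1) = to_fract (coeff A k) - S" by (simp add: algebra_simps)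
      have "mu k = (mu k * (2 * mu 0 - 1)) * (2 * mu 0 - 1)" using eps by (simp add: mult.assoc)
      also have "\<dots> = (to_fract (coeff A k) - S) * (2 * mu 0 - 1)" by (simp only: h)
      also have "\<dots> = to_fract ((coeff A k - (\<Sum>i\<in>{1..<k}. r i * r (k - i))) * e0)"
        by (simp only: S e0[symmetric] to_fract_mult to_fract_diff)
      finally show ?thesis by (simp only: rangeI)
    qed
  qed
  define U where "U = map_poly (\<lambda>y. SOME r. to_fract r = y) V"
  have sz: "(SOME r. to_fract r = (0::'b fract)) = 0"
    by (metis (mono_tags, lifting) someI to_fract_0 to_fract_eq_0_iff)
  have "?f U = V"
  proof (rule poly_eqI)
    fix k
    have "to_fract (SOME r. to_fract r = mu k) = mu k"
      using key[of k] by (metis (mono_tags, lifting) imageE someI)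
    thus "coeff (?f U) k = coeff V k" unfolding U_def
      by (simp add: coeff_map_poly sz mu_def)
  qed
  hence "?f (U * A) = ?f B" using V by (simp add: fract_poly_mult)
  hence "U * A = B" by (simp only: fract_poly_eq_iff)
  thus ?thesis by metis
qed


lemma hom_sum:
  assumes h0: "h 0 = 0" and hadd: "\<And>x y. h (x + y) = h x + h y"
  shows "h (sum f S) = (\<Sum>i\<in>S. h (f i))"
  by (induction S rule: infinite_finite_induct) (auto simp: h0 hadd)

lemma map_poly_hom_add:
  assumes h0: "h 0 = 0" and hadd: "\<And>x y. h (x + y) = h x + h y"
  shows "map_poly h (p + q) = map_poly h p + map_poly h q"
  by (rule poly_eqI) (simp add: coeff_map_poly h0 hadd)

lemma map_poly_hom_mult:
  fixes h :: "'a::comm_ring_1 \<Rightarrow> 'b::comm_ring_1"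
  assumes h0: "h 0 = 0" and hadd: "\<And>x y. h (x + y) = h x + h y"
    and hmult: "\<And>x y. h (x * y) = h x * h y"
  shows "map_poly h (p * q) = map_poly h p * map_poly h q"
  by (rule poly_eqI) (simp add: coeff_map_poly h0 coeff_mult hom_sum[of h, OF h0 hadd] hmult)

lemma poly_hom:
  fixes h :: "'a::comm_ring_1 \<Rightarrow> 'b::comm_ring_1"
  assumes h0: "h 0 = 0" and hadd: "\<And>x y. h (x + y) = h x + h y"
    and hmult: "\<And>x y. h (x * y) = h x * h y"
  shows "h (poly p x) = poly (map_poly h p) (h x)"
  by (induction p) (simp_all add: map_poly_pCons h0 hadd hmult)

lemma const_hom:
  "[:(0::'a::comm_ring_1):] = 0" "\<And>x y. [:x + y:] = [:x:] + [:(y::'a::comm_ring_1):]"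
  "\<And>x y. [:x * y:] = [:x:] * [:(y::'a::comm_ring_1):]"
  by simp_all

lemma ev_hom:
  "poly (0::'a::comm_ring_1 poly) a = 0" "\<And>x y. poly (x + y) a = poly x a + poly (y::'a::comm_ring_1 poly) a"
  "\<And>x y. poly (x * y) a = poly x a * poly (y::'a::comm_ring_1 poly) a"
  by simp_all

lemma mapconst_hom:
  "map_poly (\<lambda>c. [:c:]) (0::'a::comm_ring_1 poly) = 0"
  "\<And>x y. map_poly (\<lambda>c. [:c:]) (x + y) = map_poly (\<lambda>c. [:c:]) x + map_poly (\<lambda>c. [:c:]) (y::'a::comm_ring_1 poly)"
  "\<And>x y. map_poly (\<lambda>c. [:c:]) (x * y) = map_poly (\<lambda>c. [:c:]) x * map_poly (\<lambda>c. [:c:]) (y::'a::comm_ring_1 poly)"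
  by (simp_all add: map_poly_hom_add[of "\<lambda>c. [:c:]"] map_poly_hom_mult[of "\<lambda>c. [:c:]"])

lemma mapev_hom:
  "map_poly (\<lambda>r. poly r a) (0::'a::comm_ring_1 poly poly) = 0"
  "\<And>x y. map_poly (\<lambda>r. poly r a) (x + y) = map_poly (\<lambda>r. poly r a) x + map_poly (\<lambda>r. poly r a) (y::'a::comm_ring_1 poly poly)"
  "\<And>x y. map_poly (\<lambda>r. poly r a) (x * y) = map_poly (\<lambda>r. poly r a) x * map_poly (\<lambda>r. poly r a) (y::'a::comm_ring_1 poly poly)"
  by (simp_all add: map_poly_hom_add[of "\<lambda>r. poly r a"] map_poly_hom_mult[of "\<lambda>r. poly r a"])

definition swap :: "'a::comm_ring_1 poly poly \<Rightarrow> 'a poly poly" where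
  "swap P = poly (map_poly (map_poly (\<lambda>c. [:c:])) P) [:[:0,1:]:]"

lemma swap_add: "swap (P + Q) = swap P + swap Q"
  unfolding swap_def
  by (simp add: map_poly_hom_add[of "map_poly (\<lambda>c. [:c:])"] mapconst_hom)

lemma swap_mult: "swap (P * Q) = swap P * swap Q"
  unfolding swap_def
  by (simp add: map_poly_hom_mult[of "map_poly (\<lambda>c. [:c:])"] mapconst_hom)

lemma swap_const: "swap [:[:c:]:] = [:[:c:]:]"
  unfolding swap_def by (simp add: map_poly_pCons)

lemma swap_ev: "map_poly (\<lambda>r. poly r a) (swap P) = poly P [:a:]"
proof -
  let ?h = "map_poly (\<lambda>r. poly r a) :: 'a poly poly \<Rightarrow> 'a poly"
  have "?h (swap P) = poly (map_poly ?h (map_poly (map_poly (\<lambda>c. [:c:])) P)) (?h [:[:0,1:]:])"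
    unfolding swap_def by (rule poly_hom) (simp_all add: mapev_hom)
  also have "map_poly ?h (map_poly (map_poly (\<lambda>c. [:c:])) P) = map_poly (?h \<circ> map_poly (\<lambda>c. [:c:])) P"
    by (rule map_poly_map_poly) simp_all
  also have "?h \<circ> map_poly (\<lambda>c. [:c:]) = id"
  proof
    fix p :: "'a poly"
    show "(?h \<circ> map_poly (\<lambda>c. [:c:])) p = id p"
      by (simp add: map_poly_map_poly o_def)
  qed
  finally show ?thesis by (simp add: map_poly_pCons)
qed

lemma swap_evT: "poly (swap P) [:c:] = map_poly (\<lambda>p. poly p c) P"
proof -
  let ?E = "\<lambda>Q::'a poly poly. poly Q [:c:]"
  have "?E (swap P) = poly (map_poly ?E (map_poly (map_poly (\<lambda>c. [:c:])) P)) (?E [:[:0,1:]:])"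
    unfolding swap_def by (rule poly_hom) simp_all
  also have "map_poly ?E (map_poly (map_poly (\<lambda>c. [:c:])) P) = map_poly (?E \<circ> map_poly (\<lambda>c. [:c:])) P"
    by (rule map_poly_map_poly) simp_all
  also have "?E \<circ> map_poly (\<lambda>c. [:c:]) = (\<lambda>x. [:x:]) \<circ> (\<lambda>p. poly p c)"
  proof
    fix p :: "'a poly"
    show "(?E \<circ> map_poly (\<lambda>c. [:c:])) p = ((\<lambda>x. [:x:]) \<circ> (\<lambda>p. poly p c)) p"
      by (simp add: pcompose_altdef[symmetric] pcompose_pCons_0)
  qed
  also have "map_poly ((\<lambda>x. [:x:]) \<circ> (\<lambda>p. poly p c)) P = map_poly (\<lambda>x. [:x:]) (map_poly (\<lambda>p. poly p c) P)"
    by (rule map_poly_map_poly[symmetric]) simp_all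
  finally show ?thesis by (simp add: pcompose_altdef[symmetric])
qed


definition compj :: "('a::comm_ring_1 \<Rightarrow> 'b::comm_ring_1) \<Rightarrow> 'a poly \<Rightarrow> 'b poly \<Rightarrow> 'b poly" where
  "compj j x U = poly (map_poly (\<lambda>c. [:j c:]) x) U"

lemma om: "[:0,-1,1:] * p \<in> Omega0" by (auto simp: Omega0_def)

lemma omE: "x \<in> Omega0 \<Longrightarrow> \<exists>p. x = [:0,-1,1:] * p" by (auto simp: Omega0_def)

locale jhom =
  fixes j :: "'a::comm_ring_1 \<Rightarrow> 'b::comm_ring_1"
  assumes j0: "j 0 = 0" and jadd: "\<And>x y. j (x + y) = j x + j y"
    and jmult: "\<And>x y. j (x * y) = j x * j y" and j1: "j 1 = 1"
begin

lemma jneg: "j (- x) = - j x"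
  by (metis add.right_inverse add_eq_0_iff j0 jadd)

lemma J0: "(\<lambda>c. [:j c:]) 0 = 0" by (simp add: j0)
lemma Jadd: "\<And>x y. (\<lambda>c. [:j c:]) (x + y) = (\<lambda>c. [:j c:]) x + (\<lambda>c. [:j c:]) y" by (simp add: jadd)
lemma Jmult: "\<And>x y. (\<lambda>c. [:j c:]) (x * y) = (\<lambda>c. [:j c:]) x * (\<lambda>c. [:j c:]) y" by (simp add: jmult)

lemma compj_mult: "compj j (x * y) U = compj j x U * compj j y U"
  unfolding compj_def by (simp add: map_poly_hom_mult[OF J0 Jadd Jmult])

lemma compj_add: "compj j (x + y) U = compj j x U + compj j y U"
  unfolding compj_def by (simp add: map_poly_hom_add[OF J0 Jadd])

lemma compj_pCons: "compj j (pCons a p) U = [:j a:] + U * compj j p U"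
  unfolding compj_def by (simp add: map_poly_pCons j0)

lemma compj_0: "compj j 0 U = 0"
  unfolding compj_def by simp

lemma compj_e: "compj j [:0,-1,1:] U = U * U - U"
  by (simp add: compj_pCons compj_0 j0 j1 jneg algebra_simps)

end

lemma poly_ident: "([:0,-1,1:] * [:0,1:]) * ([:0,-1,1:] * [:0,1:]) =
   [:0,-1,1:] * ([:0,-1,1:] * [:0,-1,1:]) + [:0,-1,1:] * ([:0,-1,1:] * ([:0,1:] :: 'a::comm_ring_1 poly))"
  by simp

lemma CL:
  fixes psi :: "'a::idom poly \<Rightarrow> 'b::idom poly" and j :: "'a \<Rightarrow> 'b"
  assumes jh: "jhom j"
    and padd: "\<And>x y. x \<in> Omega0 \<Longrightarrow> y \<in> Omega0 \<Longrightarrow> psi (x + y) = psi x + psi y"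
    and pmult: "\<And>x y. x \<in> Omega0 \<Longrightarrow> y \<in> Omega0 \<Longrightarrow> psi (x * y) = psi x * psi y"
    and psc: "\<And>c x. x \<in> Omega0 \<Longrightarrow> psi ([:c:] * x) = [:j c:] * psi x"
    and pev: "poly (psi [:0,-1,1:]) 0 = 0"
    and nz: "psi [:0,-1,1:] \<noteq> 0"
  shows "\<exists>U. \<forall>x\<in>Omega0. psi x = compj j x U"
proof -
  interpret jhom j by (rule jh)
  define e :: "'a poly" where "e = [:0,-1,1:]"
  define t :: "'a poly" where "t = [:0,1:]"
  have oe: "e * p \<in> Omega0" for p unfolding e_def by (rule om)
  define A where "A = psi e"
  define B where "B = psi (e * t)"
  have eO: "e \<in> Omega0" using oe[of 1] by simp
  have psi0: "psi 0 = 0"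
  proof -
    have "psi (0 + 0) = psi 0 + psi 0" by (rule padd) (use oe[of 0] in simp_all)
    hence "psi 0 = psi 0 + psi 0" by (simp only: add_0_left)
    thus ?thesis by (simp only: add_cancel_right_right)
  qed
  have Anz: "A \<noteq> 0" using nz unfolding A_def e_def .
  have "psi ((e * t) * (e * t)) = B * B" unfolding B_def by (rule pmult) (simp_all add: oe)
  also have "(e * t) * (e * t) = e * (e * e) + e * (e * t)" unfolding e_def t_def by (rule poly_ident)
  finally have "B * B = psi (e * (e * e)) + psi (e * (e * t))"
    using padd[OF oe oe] by simp
  also have "psi (e * (e * e)) = A * (A * A)" unfolding A_def using pmult eO oe by (simp add: mult.assoc[symmetric])
  also have "psi (e * (e * t)) = A * B" unfolding A_def B_def using pmult eO oe by simp
  finally have rel: "B * B = A * B + A * A * A" by (simp add: algebra_simps)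
  obtain U where BU: "B = U * A" using L2[OF Anz rel] pev unfolding A_def e_def by blast
  have "(A * A) * (U * U - U - A) = 0" using rel unfolding BU by (simp add: algebra_simps)
  hence UU: "U * U - U = A" using Anz by simp
  have main: "psi (e * r) = A * compj j r U" for r
  proof (induction r)
    case 0
    then show ?case by (simp add: psi0 compj_0)
  next
    case (pCons a p)
    have "psi (e * (t * p)) * A = psi ((e * t) * (e * p))"
      unfolding A_def by (subst pmult[symmetric]) (simp_all add: oe eO mult_ac)
    also have "\<dots> = B * psi (e * p)" unfolding B_def by (rule pmult) (simp_all add: oe)
    also have "\<dots> = (U * compj j p U) * A * A" using pCons.IH BU by (simp add: mult_ac)
    finally have s: "psi (e * (t * p)) = U * compj j p U * A" using Anz by simp
    have "e * pCons a p = [:a:] * e + e * (t * p)" unfolding t_def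
      by (simp add: algebra_simps)
    hence "psi (e * pCons a p) = [:j a:] * A + psi (e * (t * p))"
      unfolding A_def using padd psc oe eO by (metis mult.commute mult.left_commute)
    also have "\<dots> = A * compj j (pCons a p) U" using s by (simp add: compj_pCons algebra_simps)
    finally show ?case .
  qed
  have "\<forall>x\<in>Omega0. psi x = compj j x U"
  proof
    fix x :: "'a poly" assume "x \<in> Omega0"
    then obtain r where r: "x = e * r" using omE unfolding e_def by blast
    have "compj j x U = compj j e U * compj j r U" unfolding r by (rule compj_mult)
    also have "compj j e U = A" unfolding e_def using UU compj_e by simp
    finally show "psi x = compj j x U" using main r by simp
  qed
  thus ?thesis by blast
qed


definition Ipr :: "('a::idom poly \<Rightarrow> 'a poly) \<Rightarrow> bool" where
  "Ipr f \<longleftrightarrow> (\<exists>u. (\<forall>x\<in>Omega0. f x = pcompose x u) \<and> poly u 0 \<noteq> poly u 1)"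

lemma om_vanish: "x \<in> Omega0 \<Longrightarrow> poly x 0 = 0 \<and> poly x 1 = 0"
  by (auto simp: Omega0_def)

lemma idem01: "(g::'b::idom) * g = g \<Longrightarrow> g = 0 \<or> g = 1"
  by (metis mult_cancel_left1 mult_zero_left)

lemma pcomp_e: "pcompose [:0,-1,1:] (u :: 'a::comm_ring_1 poly) = u * u - u"
  by (simp add: pcompose_pCons algebra_simps)

lemma pcomp_e_nz: "poly u 0 \<noteq> poly u 1 \<Longrightarrow> pcompose [:0,-1,1:] (u :: 'a::idom poly) \<noteq> 0"
proof
  assume "poly u 0 \<noteq> poly u 1" "pcompose [:0,-1,1:] u = 0"
  hence "u * u = u" by (simp add: pcomp_e)
  hence "u = 0 \<or> u = 1" by (rule idem01)
  thus False using \<open>poly u 0 \<noteq> poly u 1\<close> by auto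
qed

lemma jhom_const: "jhom (\<lambda>c::'a::comm_ring_1. [:c:])"
  by unfold_locales simp_all

lemma transfer:
  fixes H :: "'a::idom poly \<Rightarrow> 'a poly poly"
  assumes Hh: "alg_hom emb0 (poly_emb emb0) Omega0 (poly_alg Omega0) H"
    and fH: "\<forall>x\<in>Omega0. f x = poly (H x) [:a:]"
    and gH: "\<forall>x\<in>Omega0. g x = poly (H x) [:b:]"
    and If: "Ipr f"
  shows "Ipr g"
proof -
  obtain u where u: "\<forall>x\<in>Omega0. f x = pcompose x u" "poly u 0 \<noteq> poly u 1"
    using If unfolding Ipr_def by blast
  have Hin: "\<And>x. x \<in> Omega0 \<Longrightarrow> H x \<in> poly_alg Omega0"
    and Hadd: "\<And>x y. x \<in> Omega0 \<Longrightarrow> y \<in> Omega0 \<Longrightarrow> H (x + y) = H x + H y"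
    and Hmult: "\<And>x y. x \<in> Omega0 \<Longrightarrow> y \<in> Omega0 \<Longrightarrow> H (x * y) = H x * H y"
    and Hsc: "\<And>c x. x \<in> Omega0 \<Longrightarrow> H ([:c:] * x) = [:[:c:]:] * H x"
    using Hh unfolding alg_hom_def emb0_def poly_emb_def by auto
  define psi where "psi x = swap (H x)" for x
  have van: "poly (psi x) [:c:] = 0" if "x \<in> Omega0" "c = 0 \<or> c = 1" for x c
  proof -
    have "poly (psi x) [:c:] = map_poly (\<lambda>p. poly p c) (H x)" unfolding psi_def by (rule swap_evT)
    also have "\<dots> = 0"
    proof (rule poly_eqI)
      fix k
      have "coeff (H x) k \<in> Omega0" using Hin[OF that(1)] unfolding poly_alg_def by auto
      thus "coeff (map_poly (\<lambda>p. poly p c) (H x)) k = coeff 0 k"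
        using om_vanish that(2) by (auto simp: coeff_map_poly)
    qed
    finally show ?thesis .
  qed
  define e :: "'a poly" where "e = [:0,-1,1:]"
  have eO: "e \<in> Omega0" using om[of 1] unfolding e_def by simp
  have evpsi: "map_poly (\<lambda>r. poly r c) (psi x) = poly (H x) [:c:]" for x c
    unfolding psi_def by (rule swap_ev)
  have nz: "psi e \<noteq> 0"
  proof
    assume "psi e = 0"
    hence "f e = 0" using evpsi[of a e] fH eO by simp
    moreover have "f e \<noteq> 0" using u eO pcomp_e_nz unfolding e_def by auto
    ultimately show False by simp
  qed
  obtain U where U: "\<forall>x\<in>Omega0. psi x = compj (\<lambda>c. [:c:]) x U"
  proof -
    have "\<exists>U. \<forall>x\<in>Omega0. psi x = compj (\<lambda>c. [:c:]) x U"
    proof (rule CL[OF jhom_const])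
      show "\<And>x y. x \<in> Omega0 \<Longrightarrow> y \<in> Omega0 \<Longrightarrow> psi (x + y) = psi x + psi y"
        unfolding psi_def by (simp add: Hadd swap_add)
      show "\<And>x y. x \<in> Omega0 \<Longrightarrow> y \<in> Omega0 \<Longrightarrow> psi (x * y) = psi x * psi y"
        unfolding psi_def by (simp add: Hmult swap_mult)
      show "\<And>c x. x \<in> Omega0 \<Longrightarrow> psi ([:c:] * x) = [:[:c:]:] * psi x"
        by (simp only: psi_def Hsc swap_mult swap_const)
      show "poly (psi [:0,-1,1:]) 0 = 0" using van[of e 0] eO unfolding e_def by simp
      show "psi [:0,-1,1:] \<noteq> 0" using nz unfolding e_def .
    qed
    thus ?thesis using that by blast
  qed
  interpret J: jhom "\<lambda>c::'a. [:c:]" by (rule jhom_const)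
  have spec: "map_poly (\<lambda>r. poly r d) (psi x) = pcompose x (map_poly (\<lambda>r. poly r d) U)"
    if "x \<in> Omega0" for x d
  proof -
    let ?h = "map_poly (\<lambda>r. poly r d) :: 'a poly poly \<Rightarrow> 'a poly"
    have "?h (psi x) = ?h (poly (map_poly (\<lambda>c. [:[:c:]:]) x) U)"
      using U that unfolding compj_def by simp
    also have "\<dots> = poly (map_poly ?h (map_poly (\<lambda>c. [:[:c:]:]) x)) (?h U)"
      by (rule poly_hom) (simp_all add: mapev_hom)
    also have "map_poly ?h (map_poly (\<lambda>c. [:[:c:]:]) x) = map_poly (?h \<circ> (\<lambda>c. [:[:c:]:])) x"
      by (rule map_poly_map_poly) simp_all
    also have "?h \<circ> (\<lambda>c. [:[:c:]:]) = (\<lambda>c. [:c:])"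
      by (rule ext) (simp add: map_poly_pCons)
    finally show ?thesis by (simp add: pcompose_altdef)
  qed
  define Ua where "Ua = map_poly (\<lambda>r. poly r a) U"
  define Ub where "Ub = map_poly (\<lambda>r. poly r b) U"
  have fU: "f x = pcompose x Ua" if "x \<in> Omega0" for x
    using fH that spec[OF that, of a] evpsi[of a x] unfolding Ua_def by simp
  have gU: "g x = pcompose x Ub" if "x \<in> Omega0" for x
    using gH that spec[OF that, of b] evpsi[of b x] unfolding Ub_def by simp
  have ue: "pcompose e u = pcompose e Ua" using fU u eO by simp
  have etO: "e * [:0,1:] \<in> Omega0" using om unfolding e_def by blast
  have "pcompose (e * [:0,1:]) u = pcompose (e * [:0,1:]) Ua" using fU u etO by simp
  hence "pcompose e u * u = pcompose e Ua * Ua" by (simp add: pcompose_mult pcompose_pCons) (metis mult.commute)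
  moreover have "pcompose e u \<noteq> 0" using pcomp_e_nz u(2) unfolding e_def .
  ultimately have uUa: "u = Ua" using ue by simp
  have ends: "poly Ua c = poly Ub c" if "c = 0 \<or> c = 1" for c
  proof -
    define gam where "gam = poly U [:c:]"
    have "psi e = U * U - U" using U eO J.compj_e unfolding e_def by simp
    hence "poly (U * U - U) [:c:] = 0" using van[OF eO that] by simp
    hence "gam * gam = gam" unfolding gam_def by simp
    hence g01: "gam = 0 \<or> gam = 1" by (rule idem01)
    have pa: "poly (map_poly (\<lambda>r. poly r d) U) c = poly gam d" for d
    proof -
      have "poly (poly U [:c:]) d = poly (map_poly (\<lambda>r. poly r d) U) (poly [:c:] d)"
        by (rule poly_hom) simp_all
      thus ?thesis unfolding gam_def by simp
    qed
    show ?thesis unfolding Ua_def Ub_def pa using g01 by auto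
  qed
  have "poly Ub 0 \<noteq> poly Ub 1" using ends[of 0] ends[of 1] u(2) uUa by simp
  thus ?thesis unfolding Ipr_def using gU by blast
qed

lemma elem_inv:
  assumes "elem_homotopic emb0 emb0 Omega0 Omega0 f h"
  shows "Ipr (f :: 'a::idom poly \<Rightarrow> 'a poly) \<longleftrightarrow> Ipr h"
proof -
  obtain H where H: "alg_hom emb0 (poly_emb emb0) Omega0 (poly_alg Omega0) H"
    "\<forall>x\<in>Omega0. poly (H x) 0 = f x" "\<forall>x\<in>Omega0. poly (H x) 1 = h x"
    using assms unfolding elem_homotopic_def by blast
  have f: "\<forall>x\<in>Omega0. f x = poly (H x) [:0:]" using H(2) by simp
  have g: "\<forall>x\<in>Omega0. h x = poly (H x) [:1:]" using H(3) by (simp add: one_pCons)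
  show ?thesis using transfer[OF H(1) f g] transfer[OF H(1) g f] by blast
qed

lemma chain_inv:
  assumes "homotopic emb0 emb0 Omega0 Omega0 f h"
  shows "Ipr (f :: 'a::idom poly \<Rightarrow> 'a poly) \<longleftrightarrow> Ipr h"
  using assms unfolding homotopic_def
proof (induction rule: rtranclp_induct)
  case base
  then show ?case by simp
next
  case (step y z)
  then show ?case using elem_inv by blast
qed

lemma Ipr_id: "Ipr (id :: 'a::idom poly \<Rightarrow> 'a poly)"
  unfolding Ipr_def by (rule exI[of _ "[:0,1:]"]) simp

lemma not_Ipr:
  fixes g :: "(bool \<Rightarrow> 'a::idom poly) \<Rightarrow> 'a poly"
  assumes galg: "alg_hom emb1 emb0 Omega1 Omega0 g"
  shows "\<not> Ipr (g \<circ> beta)"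
proof
  assume "Ipr (g \<circ> beta)"
  then obtain u where u: "\<forall>x\<in>Omega0. g (beta x) = pcompose x u" "poly u 0 \<noteq> poly u 1"
    unfolding Ipr_def by auto
  have gin: "\<And>x. x \<in> Omega1 \<Longrightarrow> g x \<in> Omega0"
    and gmult: "\<And>x y. x \<in> Omega1 \<Longrightarrow> y \<in> Omega1 \<Longrightarrow> g (x * y) = g x * g y"
    using galg unfolding alg_hom_def by auto
  define y :: "bool \<Rightarrow> 'a poly" where "y = (\<lambda>b. if b then [:0,1:] else [:1,-1:])"
  have yO: "y \<in> Omega1" unfolding y_def Omega1_def by simp
  define e :: "'a poly" where "e = [:0,-1,1:]"
  have eO: "e \<in> Omega0" using om[of 1] unfolding e_def by simp
  have etO: "[:0,1:] * e \<in> Omega0" using om[of "[:0,1:]"] unfolding e_def by (simp add: mult.commute)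
  have bO: "beta p \<in> Omega1" if "p \<in> Omega0" for p
    using om_vanish[OF that] unfolding beta_def Omega1_def by simp
  have yb: "y * beta e = beta ([:0,1:] * e)"
    unfolding y_def beta_def by (rule ext) simp
  have "g (beta ([:0,1:] * e)) = g y * g (beta e)" using gmult[OF yO bO[OF eO]] yb by simp
  hence "pcompose ([:0,1:] * e) u = g y * pcompose e u" using u(1) eO etO by simp
  hence "u * pcompose e u = g y * pcompose e u" by (simp add: pcompose_mult pcompose_pCons)
  moreover have "pcompose e u \<noteq> 0" using pcomp_e_nz u(2) unfolding e_def .
  ultimately have "u = g y" by simp
  hence "u \<in> Omega0" using gin[OF yO] by simp
  thus False using om_vanish[of u] u(2) by simp
qed

theorem lemma3p1:
  shows "\<not> poly_htpy_equiv (emb0 :: 'a::idom \<Rightarrow> 'a poly) emb1 Omega0 Omega1 beta"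
proof
  assume "poly_htpy_equiv (emb0 :: 'a::idom \<Rightarrow> 'a poly) emb1 Omega0 Omega1 beta"
  then obtain g :: "(bool \<Rightarrow> 'a poly) \<Rightarrow> 'a poly" where g: "alg_hom emb1 emb0 Omega1 Omega0 g"
    "homotopic emb0 emb0 Omega0 Omega0 (g \<circ> beta) id"
    unfolding poly_htpy_equiv_def by blast
  have "Ipr (g \<circ> beta)" using chain_inv[OF g(2)] Ipr_id by blast
  thus False using not_Ipr[OF g(1)] by blast
qed

end
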